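(* Let $f:\mathbb{R}^n\to\mathbb{R}$ be of class $C^{2+}$ with $L_f$-Lipschitz continuous gradient, let $g:\mathbb{R}^n\to\mathbb{R}\cup\{+\infty\}$ be proper, lower semicontinuous and $\rho$-weakly convex, let $\varphi=f+g$ with $\operatorname{argmin}\varphi\neq\emptyset$, and suppose that for a given $x^0$ the sublevel set $\{x:\varphi(x)\le\varphi(x^0)\}$ is bounded. Then for $\gamma\in(0,\min\{1/L_f,1/\rho\})$, the sublevel set $\{x\in\mathbb{R}^n:\varphi_\gamma(x)\le\varphi_\gamma(x^0)\}$ is bounded.
   Context: $C^{2+}$: twice continuously differentiable with locally Lipschitz Hessian. $g$ is $\rho$-weakly convex if $g+\frac\rho2\|\cdot\|^2$ is convex. Forward-backward envelope: $\varphi_\gamma(x)=\inf_u\{f(x)+\langle\nabla f(x),u-x\rangle+g(u)+\frac1{2\gamma}\|u-x\|^2\}$. *)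

theory Defs
  imports "HOL-Analysis.Analysis"
begin

definition C2plus :: "('a::euclidean_space \<Rightarrow> real) \<Rightarrow> bool" where
  "C2plus f \<longleftrightarrow> (\<exists>(grad :: 'a \<Rightarrow> 'a) (H :: 'a \<Rightarrow> ('a \<Rightarrow>\<^sub>L 'a)).
      (\<forall>x. (f has_derivative (\<lambda>h. grad x \<bullet> h)) (at x)) \<and>
      (\<forall>x. (grad has_derivative blinfun_apply (H x)) (at x)) \<and>
      continuous_on UNIV H \<and>
      (\<forall>x. \<exists>e>0. \<exists>K. K-lipschitz_on (ball x e) H))"

definition proper_fun :: "('a \<Rightarrow> ereal) \<Rightarrow> bool" where
  "proper_fun g \<longleftrightarrow> (\<forall>x. g x \<noteq> -\<infinity>) \<and> (\<exists>x. g x \<noteq> \<infinity>)"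

definition lsc_fun :: "('a::topological_space \<Rightarrow> ereal) \<Rightarrow> bool" where
  "lsc_fun g \<longleftrightarrow> (\<forall>x. g x \<le> Liminf (at x) g)"

definition ext_convex :: "('a::real_vector \<Rightarrow> ereal) \<Rightarrow> bool" where
  "ext_convex h \<longleftrightarrow> (\<forall>x y t. 0 < t \<and> t < 1 \<longrightarrow>
      h ((1 - t) *\<^sub>R x + t *\<^sub>R y) \<le> ereal (1 - t) * h x + ereal t * h y)"

definition weakly_convex :: "real \<Rightarrow> ('a::real_normed_vector \<Rightarrow> ereal) \<Rightarrow> bool" where
  "weakly_convex \<rho> g \<longleftrightarrow> ext_convex (\<lambda>x. g x + ereal (\<rho> / 2 * (norm x)\<^sup>2))"

definition fbe :: "('a::euclidean_space \<Rightarrow> real) \<Rightarrow> ('a \<Rightarrow> 'a) \<Rightarrow> ('a \<Rightarrow> ereal) \<Rightarrow> real \<Rightarrow> 'a \<Rightarrow> ereal" where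
  "fbe f grad g \<gamma> x = (INF u. ereal (f x + grad x \<bullet> (u - x)) + g u
                              + ereal (1 / (2 * \<gamma>) * (norm (u - x))\<^sup>2))"

end

theory Submission imports Defs begin
lemma descent:
  fixes f :: "'a::euclidean_space \<Rightarrow> real"
  assumes grad: "\<And>x. (f has_derivative (\<lambda>h. grad x \<bullet> h)) (at x)"
    and lip: "L-lipschitz_on UNIV grad"
  shows "f u \<le> f x + grad x \<bullet> (u - x) + L / 2 * (norm (u - x))\<^sup>2"
proof -
  define d where "d = u - x"
  define q where "q t = f (x + t *\<^sub>R d) - t * (grad x \<bullet> d) - L / 2 * t\<^sup>2 * (norm d)\<^sup>2" for t
  have L0: "0 \<le> L" using lip lipschitz_on_nonneg by blast
  have der: "DERIV q t :> (grad (x + t *\<^sub>R d) \<bullet> d - grad x \<bullet> d - L * t * (norm d)\<^sup>2)" for t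
  proof -
    have h1: "((\<lambda>t. x + t *\<^sub>R d) has_derivative (\<lambda>h. h *\<^sub>R d)) (at t)"
      by (auto intro!: derivative_eq_intros)
    have "((\<lambda>t. f (x + t *\<^sub>R d)) has_derivative (\<lambda>h. grad (x + t *\<^sub>R d) \<bullet> (h *\<^sub>R d))) (at t)"
      using has_derivative_compose[OF h1 grad] by simp
    then have "((\<lambda>t. f (x + t *\<^sub>R d)) has_real_derivative (grad (x + t *\<^sub>R d) \<bullet> d)) (at t)"
      unfolding has_field_derivative_def by (simp add: mult.commute[of _ "grad (x + t *\<^sub>R d) \<bullet> d"])
    then show ?thesis unfolding q_def
      by (auto intro!: derivative_eq_intros simp: power2_eq_square algebra_simps)
  qed
  have "q 1 \<le> q 0"
  proof (rule DERIV_nonpos_imp_nonincreasing[of 0 1 q])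
    fix t :: real assume t: "0 \<le> t" "t \<le> 1"
    have "(grad (x + t *\<^sub>R d) - grad x) \<bullet> d \<le> norm (grad (x + t *\<^sub>R d) - grad x) * norm d"
      by (rule norm_cauchy_schwarz)
    also have "\<dots> \<le> L * norm (t *\<^sub>R d) * norm d"
      using lipschitz_onD[OF lip, of "x + t *\<^sub>R d" x] by (simp add: dist_norm mult_right_mono)
    also have "\<dots> = L * t * (norm d)\<^sup>2" using t by (simp add: power2_eq_square)
    finally show "\<exists>y. DERIV q t :> y \<and> y \<le> 0"
      using der by (intro exI[of _ "grad (x + t *\<^sub>R d) \<bullet> d - grad x \<bullet> d - L * t * (norm d)\<^sup>2"])
        (simp add: inner_diff_left)
  qed simp
  then show ?thesis unfolding q_def d_def by simp
qed

lemma lsc_lim: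
  fixes f :: "'a::euclidean_space \<Rightarrow> real" and g :: "'a \<Rightarrow> ereal"
  assumes lsc: "lsc_fun g" and cont: "isCont f l"
    and lim: "v \<longlonglongrightarrow> l"
    and le: "\<And>n. ereal (f (v n)) + g (v n) \<le> ereal (a + 1 / real (Suc n))"
  shows "ereal (f l) + g l \<le> ereal a"
proof (rule ccontr)
  assume "\<not> ?thesis"
  then have "ereal a < ereal (f l) + g l" by simp
  then have "ereal (a - f l) < g l" by (cases "g l") auto
  then obtain z where z1: "ereal (a - f l) < ereal z" and z2: "ereal z < g l"
    using ereal_dense2 by blast
  define \<delta> where "\<delta> = z - (a - f l)"
  have dpos: "\<delta> > 0" using z1 unfolding \<delta>_def by simp
  have "g l \<le> Liminf (at l) g" using lsc unfolding lsc_fun_def by blast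
  then have "eventually (\<lambda>u. ereal z < g u) (at l)" using z2 le_Liminf_iff by blast
  then have "eventually (\<lambda>u. ereal z < g u) (nhds l)" using z2 eventually_nhds_conv_at by blast
  then have E1: "eventually (\<lambda>n. ereal z < g (v n)) sequentially"
    using eventually_compose_filterlim lim by blast
  have "(\<lambda>n. f (v n)) \<longlonglongrightarrow> f l" using isCont_tendsto_compose[OF cont lim] .
  then have E2: "eventually (\<lambda>n. f l - \<delta>/2 < f (v n)) sequentially"
    using dpos by (intro order_tendstoD) auto
  have "(\<lambda>n. 1 / real (Suc n)) \<longlonglongrightarrow> 0" using LIMSEQ_inverse_real_of_nat
    by (simp add: inverse_eq_divide)
  then have E3: "eventually (\<lambda>n. 1 / real (Suc n) < \<delta>/2) sequentially"
    using dpos by (intro order_tendstoD) auto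
  from eventually_conj[OF E1 eventually_conj[OF E2 E3]] obtain n where
    n1: "ereal z < g (v n)" and n2: "f l - \<delta>/2 < f (v n)" and n3: "1 / real (Suc n) < \<delta>/2"
    using eventually_sequentially by auto
  have "ereal (f (v n) + z) < ereal (f (v n)) + g (v n)" using n1 by (cases "g (v n)") auto
  also have "\<dots> \<le> ereal (a + 1 / real (Suc n))" by (rule le)
  finally have "f (v n) + z < a + 1 / real (Suc n)" by simp
  moreover have "a + \<delta>/2 = f l - \<delta>/2 + z" unfolding \<delta>_def by (simp add: field_simps)
  ultimately show False using n2 n3 by linarith
qed

theorem lemma4p4:
  fixes f :: "'a::euclidean_space \<Rightarrow> real"
    and grad :: "'a \<Rightarrow> 'a"
    and g :: "'a \<Rightarrow> ereal"
    and Lf \<rho> \<gamma> :: real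
    and x0 :: 'a
  assumes f_C2: "C2plus f"
    and grad: "\<And>x. (f has_derivative (\<lambda>h. grad x \<bullet> h)) (at x)"
    and grad_lip: "Lf-lipschitz_on UNIV grad"
    and g_proper: "proper_fun g"
    and g_lsc: "lsc_fun g"
    and g_wc: "weakly_convex \<rho> g"
    and argmin_ne: "\<exists>xs. \<forall>x. ereal (f xs) + g xs \<le> ereal (f x) + g x"
    and sub_bdd: "bounded {x. ereal (f x) + g x \<le> ereal (f x0) + g x0}"
    and Lf_pos: "0 < Lf"
    and rho_pos: "0 < \<rho>"
    and gam_pos: "0 < \<gamma>"
    and gam_L: "\<gamma> < 1 / Lf"
    and gam_rho: "\<gamma> < 1 / \<rho>"
  shows "bounded {x. fbe f grad g \<gamma> x \<le> fbe f grad g \<gamma> x0}"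
proof -
  obtain xs where xs: "\<And>x. ereal (f xs) + g xs \<le> ereal (f x) + g x" using argmin_ne by blast
  have ninf: "\<And>x. g x \<noteq> -\<infinity>" using g_proper unfolding proper_fun_def by blast
  have g0: "g x0 \<noteq> \<infinity>"
  proof
    assume "g x0 = \<infinity>"
    then have "{x. ereal (f x) + g x \<le> ereal (f x0) + g x0} = UNIV" by simp
    then show False using sub_bdd not_bounded_UNIV by metis
  qed
  have gxs: "g xs \<noteq> \<infinity>" using xs[of x0] g0 ninf[of x0] by (cases "g x0"; cases "g xs") auto
  define a where "a = f x0 + real_of_ereal (g x0)"
  define mm where "mm = f xs + real_of_ereal (g xs)"
  have a_eq: "ereal (f x0) + g x0 = ereal a" unfolding a_def using g0 ninf[of x0] by (cases "g x0") auto
  have mm_le: "ereal mm \<le> ereal (f u) + g u" for u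
  proof -
    have "ereal (f xs) + g xs = ereal mm" unfolding mm_def using gxs ninf[of xs] by (cases "g xs") auto
    then show ?thesis using xs[of u] by simp
  qed
  obtain B where B: "\<And>x. ereal (f x) + g x \<le> ereal a \<Longrightarrow> norm x \<le> B"
    using sub_bdd unfolding bounded_iff a_eq by auto
  define T where "T x u = ereal (f x + grad x \<bullet> (u - x)) + g u + ereal (1 / (2 * \<gamma>) * (norm (u - x))\<^sup>2)" for x u
  have fbe_T: "fbe f grad g \<gamma> x = (INF u. T x u)" for x unfolding fbe_def T_def by simp
  have fbe0: "fbe f grad g \<gamma> x0 \<le> ereal a"
  proof -
    have "fbe f grad g \<gamma> x0 \<le> T x0 x0" unfolding fbe_T by (rule INF_lower) simp
    also have "T x0 x0 = ereal a" unfolding T_def using a_eq by simp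
    finally show ?thesis .
  qed
  define c where "c = 1 / (2 * \<gamma>) - Lf / 2"
  have "\<gamma> * Lf < 1" using gam_L Lf_pos by (simp add: field_simps)
  then have "Lf < 1 / \<gamma>" using gam_pos by (simp add: field_simps)
  then have cpos: "c > 0" unfolding c_def by simp
  have Tlow: "ereal (f u) + g u + ereal (c * (norm (u - x))\<^sup>2) \<le> T x u" for x u
  proof -
    have d: "f u \<le> f x + grad x \<bullet> (u - x) + Lf / 2 * (norm (u - x))\<^sup>2"
      by (rule descent[OF grad grad_lip])
    show ?thesis unfolding T_def c_def using d ninf[of u]
      by (cases "g u") (auto simp: algebra_simps)
  qed
  define R where "R = sqrt ((a + 1 - mm) / c)"
  have main: "norm x \<le> B + R" if hx: "fbe f grad g \<gamma> x \<le> ereal a" for x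
  proof -
    have "\<exists>u. ereal (f u) + g u \<le> ereal (a + 1 / real (Suc n)) \<and> u \<in> cball x R" for n
    proof -
      have "(INF u. T x u) < ereal (a + 1 / real (Suc n))"
        using hx unfolding fbe_T by (rule le_less_trans) simp
      then obtain u where u: "T x u < ereal (a + 1 / real (Suc n))" by (auto simp: INF_less_iff)
      have lt: "ereal (f u) + g u + ereal (c * (norm (u - x))\<^sup>2) < ereal (a + 1 / real (Suc n))"
        using Tlow[of u x] u by simp
      have cn: "c * (norm (u - x))\<^sup>2 \<ge> 0" using cpos by simp
      obtain r where r: "g u = ereal r" using lt ninf[of u] by (cases "g u") auto
      have lt': "f u + r + c * (norm (u - x))\<^sup>2 < a + 1 / real (Suc n)" using lt r by simp
      have mr: "mm \<le> f u + r" using mm_le[of u] r by simp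
      have "1 / real (Suc n) \<le> 1" by simp
      then have "c * (norm (u - x))\<^sup>2 \<le> a + 1 - mm" using lt' mr by linarith
      then have "(norm (u - x))\<^sup>2 \<le> (a + 1 - mm) / c" using cpos by (simp add: field_simps)
      then have "norm (u - x) \<le> R" unfolding R_def by (simp add: real_le_rsqrt)
      moreover have "ereal (f u) + g u \<le> ereal (a + 1 / real (Suc n))" using lt' cn r by simp
      ultimately show ?thesis by (auto simp: dist_norm norm_minus_commute)
    qed
    then obtain v where v: "\<And>n. ereal (f (v n)) + g (v n) \<le> ereal (a + 1 / real (Suc n))"
      "\<And>n. v n \<in> cball x R" by metis
    obtain l r where l: "l \<in> cball x R" and r: "strict_mono r" and lim: "(v \<circ> r) \<longlonglongrightarrow> l"
      using seq_compactE[OF compact_imp_seq_compact[OF compact_cball], of v] v(2) by blast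
    have le: "ereal (f ((v \<circ> r) n)) + g ((v \<circ> r) n) \<le> ereal (a + 1 / real (Suc n))" for n
    proof -
      have "n \<le> r n" using seq_suble[OF r] by simp
      then have "1 / real (Suc (r n)) \<le> 1 / real (Suc n)" by (simp add: frac_le)
      then show ?thesis using v(1)[of "r n"] by (simp add: order_trans)
    qed
    have cont: "isCont f l" using has_derivative_continuous[OF grad] .
    have "ereal (f l) + g l \<le> ereal a" by (rule lsc_lim[OF g_lsc cont lim le])
    then have "norm l \<le> B" by (rule B)
    moreover have "norm (x - l) \<le> R" using l by (simp add: dist_norm)
    ultimately show ?thesis using norm_triangle_sub[of x l] by linarith
  qed
  show ?thesis unfolding bounded_iff
    using main fbe0 by (intro exI[of _ "B + R"]) (auto intro: order_trans)
qed
end
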